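(* Let $\Gamma$ be a complete dominance graph on vertex set $\{1,\dots,n\}$ and let $\tilde{\Gamma}$ be any finite simple weighted digraph on the same vertex set with weights $0\le\tilde{w}_{ij}\le 1$. Let $L$ and $\tilde{L}$ be the graph Laplacians of $\Gamma$ and $\tilde{\Gamma}$, respectively. Then $\mathrm{hd}(L,\tilde{L})\le n-1$.
   Context: For a weighted digraph with weights $w_{ij}\ge 0$ ($w_{ij}=0$ iff $(i,j)$ is not an edge), $d^{+}(i)=\sum_j w_{ij}$, $D=\mathrm{diag}(d^{+}(1),\dots,d^{+}(n))$, $A=[w_{ij}]$, and the graph Laplacian is $L=D-A$. A complete dominance graph is an acyclic tournament (for each pair of distinct vertices exactly one of $(i,j),(j,i)$ is an edge) in which every edge has weight $1$. For $n\times n$ complex matrices $M,\tilde{M}$ with eigenvalues $\lambda_1,\dots,\lambda_n$ and $\tilde\lambda_1,\dots,\tilde\lambda_n$, the spectral variation is $\mathrm{sv}(M,\tilde M)=\max_i\min_j|\tilde\lambda_i-\lambda_j|$ and the Hausdorff distance is $\mathrm{hd}(M,\tilde M)=\max\{\mathrm{sv}(M,\tilde M),\mathrm{sv}(\tilde M,M)\}$. *)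

theory Defs
  imports "HOL-Analysis.Analysis"
begin

text \<open>Vertices are the elements of a finite type 'n (so n = CARD('n)).
  A weighted digraph is given by its weight function w, with w i j = 0 iff (i,j) is no edge.\<close>

definition out_degree :: "('n::finite \<Rightarrow> 'n \<Rightarrow> real) \<Rightarrow> 'n \<Rightarrow> real" where
  "out_degree w i = (\<Sum>j\<in>UNIV. w i j)"

definition laplacian :: "('n::finite \<Rightarrow> 'n \<Rightarrow> real) \<Rightarrow> real^'n^'n" where
  "laplacian w = (\<chi> i j. (if i = j then out_degree w i else 0) - w i j)"

definition complete_dominance_graph :: "('n::finite \<Rightarrow> 'n \<Rightarrow> real) \<Rightarrow> bool" where
  "complete_dominance_graph w \<longleftrightarrow>
     (\<exists>E :: ('n \<times> 'n) set.
        (\<forall>i j. i \<noteq> j \<longrightarrow> ((i, j) \<in> E \<longleftrightarrow> (j, i) \<notin> E)) \<and>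
        (\<forall>i. (i, i) \<notin> E) \<and>
        acyclic E \<and>
        (\<forall>i j. w i j = (if (i, j) \<in> E then 1 else 0)))"

definition simple_unit_weighted_digraph :: "('n::finite \<Rightarrow> 'n \<Rightarrow> real) \<Rightarrow> bool" where
  "simple_unit_weighted_digraph w \<longleftrightarrow> (\<forall>i. w i i = 0) \<and> (\<forall>i j. 0 \<le> w i j \<and> w i j \<le> 1)"

definition cmat :: "real^'n^'m \<Rightarrow> complex^'n^'m" where
  "cmat M = (\<chi> i j. complex_of_real (M $ i $ j))"

definition eigenvalues :: "complex^'n^'n \<Rightarrow> complex set" where
  "eigenvalues M = {c. \<exists>v. v \<noteq> 0 \<and> M *v v = c *s v}"

definition spectral_variation :: "complex^'n^'n \<Rightarrow> complex^'n^'n \<Rightarrow> real" where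
  "spectral_variation M M' =
     Max ((\<lambda>\<mu>. Min ((\<lambda>c. cmod (\<mu> - c)) ` eigenvalues M)) ` eigenvalues M')"

definition hausdorff_distance :: "complex^'n^'n \<Rightarrow> complex^'n^'n \<Rightarrow> real" where
  "hausdorff_distance M M' = max (spectral_variation M M') (spectral_variation M' M)"

end

theory Submission
  imports Defs
begin
lemma mv_sum: "(M::complex^'n^'n) *v (\<Sum>c\<in>S. f c) = (\<Sum>c\<in>S. M *v f c)"
  by (rule vec.linear_sum[OF matrix_vector_mul_linear_gen])
lemma mv_scale: "(M::complex^'n^'n) *v (k *s x) = k *s (M *v x)"
  by (rule vec.linear_scale[OF matrix_vector_mul_linear_gen])

lemma eig_indep:
  fixes M :: "complex^'n^'n"
  assumes "finite S" "\<forall>c\<in>S. v c \<noteq> 0 \<and> M *v v c = c *s v c"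
  shows "(\<Sum>c\<in>S. a c *s v c) = 0 \<Longrightarrow> c \<in> S \<Longrightarrow> a c = 0"
  using assms(1,2)
proof (induction S arbitrary: a c rule: finite_induct)
  case empty thus ?case by simp
next
  case (insert d S)
  define X where "X = (\<Sum>c\<in>S. a c *s v c)"
  have X: "X = (- a d) *s v d" using insert(1,2,4) unfolding X_def
    by (simp add: add_eq_0_iff2 add.commute vec.scale_minus_left)
  have ev: "M *v v d = d *s v d" using insert(6) by auto
  have "M *v X = (\<Sum>c\<in>S. (a c * c) *s v c)" unfolding X_def mv_sum mv_scale
    using insert(6) by (intro sum.cong) auto
  moreover have "M *v X = d *s X" unfolding X mv_scale
    using ev by (simp add: algebra_simps)
  moreover have "d *s X = (\<Sum>c\<in>S. (a c * d) *s v c)" unfolding X_def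
    by (simp add: vec.scale_sum_right mult.commute)
  ultimately have "(\<Sum>c\<in>S. (a c * c) *s v c) - (\<Sum>c\<in>S. (a c * d) *s v c) = 0" by simp
  hence "(\<Sum>c\<in>S. (a c * (c - d)) *s v c) = 0"
    by (simp add: sum_subtractf[symmetric] algebra_simps vec.scale_left_diff_distrib)
  hence z: "\<And>c. c \<in> S \<Longrightarrow> a c * (c - d) = 0" using insert(3)[of "\<lambda>c. a c * (c - d)"] insert(6) by blast
  have zS: "\<And>c. c \<in> S \<Longrightarrow> a c = 0" using z insert(2) by force
  have "X = 0" unfolding X_def using zS by simp
  hence "a d *s v d = 0" using X by simp
  hence "a d = 0" using insert(6) by (simp add: vec.scale_eq_0_iff)
  thus ?case using zS insert(5) by auto
qed

lemma eig_finite: "finite (eigenvalues (M::complex^'n^'n))"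
proof (rule ccontr)
  assume inf: "infinite (eigenvalues M)"
  obtain S where S: "finite S" "card S = CARD('n) + 1" "S \<subseteq> eigenvalues M"
    using infinite_arbitrarily_large[OF inf] by blast
  define v where "v c = (SOME v. v \<noteq> 0 \<and> M *v v = c *s v)" for c
  have vS: "\<forall>c\<in>S. v c \<noteq> 0 \<and> M *v v c = c *s v c"
  proof
    fix c assume "c \<in> S"
    hence "\<exists>v. v \<noteq> 0 \<and> M *v v = c *s v" using S(3) unfolding eigenvalues_def by auto
    thus "v c \<noteq> 0 \<and> M *v v c = c *s v c" unfolding v_def by (rule someI_ex)
  qed
  have inj: "inj_on v S"
  proof
    fix c d assume cd: "c \<in> S" "d \<in> S" "v c = v d"
    hence "c *s v c = d *s v c" using vS by metis
    hence "(c - d) *s v c = 0" by (simp add: vec.scale_left_diff_distrib)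
    thus "c = d" using vS cd by (simp add: vec.scale_eq_0_iff)
  qed
  have "vec.independent (v ` S)"
  proof (rule vec.independent_if_scalars_zero)
    show "finite (v ` S)" using S by simp
    fix f x assume s: "(\<Sum>x\<in>v ` S. f x *s x) = 0" and x: "x \<in> v ` S"
    have "(\<Sum>c\<in>S. (f \<circ> v) c *s v c) = 0" using s by (simp add: sum.reindex[OF inj])
    then show "f x = 0" using eig_indep[OF S(1) vS, of "f \<circ> v"] x by auto
  qed
  hence "card (v ` S) \<le> vec.dim (UNIV :: (complex^'n) set)"
    by (intro vec.independent_card_le_dim) auto
  also have "\<dots> = CARD('n)" by (simp add: card_cart_basis)
  finally show False using S(2) card_image[OF inj] by simp
qed
lemma lap_row: "(cmat (laplacian w) *v x) $ i =
   complex_of_real (out_degree w i) * x $ i - (\<Sum>j\<in>UNIV. complex_of_real (w i j) * x $ j)"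
proof -
  have "(cmat (laplacian w) *v x) $ i =
     (\<Sum>j\<in>UNIV. (if i = j then complex_of_real (out_degree w i) * x $ j else 0) - complex_of_real (w i j) * x $ j)"
    unfolding matrix_vector_mult_def cmat_def laplacian_def
    by (auto intro!: sum.cong simp: algebra_simps)
  also have "\<dots> = complex_of_real (out_degree w i) * x $ i - (\<Sum>j\<in>UNIV. complex_of_real (w i j) * x $ j)"
    by (simp add: sum_subtractf)
  finally show ?thesis .
qed

lemma deg_bounds:
  fixes w :: "'n::finite \<Rightarrow> 'n \<Rightarrow> real"
  assumes "simple_unit_weighted_digraph w"
  shows "0 \<le> out_degree w i" "out_degree w i \<le> real CARD('n) - 1"
proof -
  have w: "\<And>i j. 0 \<le> w i j \<and> w i j \<le> 1" "w i i = 0" using assms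
    unfolding simple_unit_weighted_digraph_def by auto
  show "0 \<le> out_degree w i" unfolding out_degree_def using w by (simp add: sum_nonneg)
  have "out_degree w i = (\<Sum>j\<in>UNIV - {i}. w i j)" unfolding out_degree_def
    using w(2) by (simp add: sum_diff1)
  also have "\<dots> \<le> (\<Sum>j\<in>UNIV - {i}. 1)" using w(1) by (intro sum_mono) auto
  also have "\<dots> = real CARD('n) - 1" by (simp add: card_Diff_subset of_nat_diff)
  finally show "out_degree w i \<le> real CARD('n) - 1" .
qed

lemma zero_eig:
  shows "0 \<in> eigenvalues (cmat (laplacian (w::'n::finite \<Rightarrow> 'n \<Rightarrow> real)))"
proof -
  define one :: "complex^'n" where "one = (\<chi> i. 1)"
  have "one \<noteq> 0" unfolding one_def by (metis vec_lambda_beta zero_index zero_neq_one)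
  moreover have "cmat (laplacian w) *v one = 0 *s one"
    by (simp add: vec_eq_iff lap_row one_def out_degree_def)
  ultimately show ?thesis unfolding eigenvalues_def by blast
qed

lemma gersh:
  fixes w :: "'n::finite \<Rightarrow> 'n \<Rightarrow> real"
  assumes "simple_unit_weighted_digraph w" "\<mu> \<in> eigenvalues (cmat (laplacian w))"
  shows "cmod (\<mu> - of_real (real CARD('n) - 1)) \<le> real CARD('n) - 1"
proof -
  have w: "\<And>i j. 0 \<le> w i j \<and> w i j \<le> 1" using assms(1)
    unfolding simple_unit_weighted_digraph_def by auto
  obtain v where v: "v \<noteq> 0" "cmat (laplacian w) *v v = \<mu> *s v"
    using assms(2) unfolding eigenvalues_def by auto
  obtain i where i: "\<And>j. cmod (v $ j) \<le> cmod (v $ i)"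
  proof -
    have "Max (range (\<lambda>j. cmod (v $ j))) \<in> range (\<lambda>j. cmod (v $ j))" by (rule Max_in) auto
    then obtain i where "cmod (v $ i) = Max (range (\<lambda>j. cmod (v $ j)))" by (metis rangeE)
    moreover have "\<And>j. cmod (v $ j) \<le> Max (range (\<lambda>j. cmod (v $ j)))" by (rule Max_ge) auto
    ultimately show ?thesis using that by metis
  qed
  have pos: "cmod (v $ i) > 0"
  proof (rule ccontr)
    assume "\<not> cmod (v $ i) > 0"
    hence "\<And>j. v $ j = 0" using i by (metis norm_le_zero_iff not_less order_trans norm_ge_zero)
    thus False using v(1) by (simp add: vec_eq_iff)
  qed
  let ?d = "out_degree w i"
  have "\<mu> * v $ i = complex_of_real ?d * v $ i - (\<Sum>j\<in>UNIV. complex_of_real (w i j) * v $ j)"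
    using arg_cong[OF v(2), of "\<lambda>x. x $ i"] by (simp add: lap_row)
  hence eq: "(complex_of_real ?d - \<mu>) * v $ i = (\<Sum>j\<in>UNIV. complex_of_real (w i j) * v $ j)"
    by (simp add: algebra_simps)
  have "cmod (complex_of_real ?d - \<mu>) * cmod (v $ i) = cmod (\<Sum>j\<in>UNIV. complex_of_real (w i j) * v $ j)"
    using eq by (metis norm_mult)
  also have "\<dots> \<le> (\<Sum>j\<in>UNIV. cmod (complex_of_real (w i j) * v $ j))" by (rule norm_sum)
  also have "\<dots> \<le> (\<Sum>j\<in>UNIV. w i j * cmod (v $ i))"
    using w i by (intro sum_mono) (simp add: norm_mult mult_left_mono)
  also have "\<dots> = ?d * cmod (v $ i)" by (simp add: out_degree_def sum_distrib_right)
  finally have "cmod (complex_of_real ?d - \<mu>) \<le> ?d" using pos by simp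
  moreover have "0 \<le> ?d" "?d \<le> real CARD('n) - 1" using deg_bounds[OF assms(1)] by auto
  moreover have "cmod (\<mu> - of_real (real CARD('n) - 1)) \<le> cmod (complex_of_real ?d - \<mu>) + cmod (of_real (real CARD('n) - 1 - ?d))"
  proof -
    have "\<mu> - of_real (real CARD('n) - 1) = - (complex_of_real ?d - \<mu>) - of_real (real CARD('n) - 1 - ?d)"
      by (simp add: algebra_simps)
    thus ?thesis by (metis norm_minus_cancel norm_triangle_ineq4)
  qed
  moreover have "cmod (complex_of_real (real CARD('n) - 1 - ?d)) = real CARD('n) - 1 - ?d"
    using deg_bounds[OF assms(1), of i] by (simp only: norm_of_real abs_of_nonneg)
  ultimately show ?thesis by linarith
qed

lemma cdg_simple:
  fixes w :: "'n::finite \<Rightarrow> 'n \<Rightarrow> real"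
  assumes "complete_dominance_graph w"
  shows "simple_unit_weighted_digraph w"
  using assms unfolding complete_dominance_graph_def simple_unit_weighted_digraph_def by auto

lemma top_eig:
  fixes w :: "'n::finite \<Rightarrow> 'n \<Rightarrow> real"
  assumes "complete_dominance_graph w"
  shows "complex_of_real (real CARD('n) - 1) \<in> eigenvalues (cmat (laplacian w))"
proof -
  obtain E :: "('n \<times> 'n) set" where E: "\<forall>i j. i \<noteq> j \<longrightarrow> ((i, j) \<in> E \<longleftrightarrow> (j, i) \<notin> E)"
    "\<forall>i. (i, i) \<notin> E" "acyclic E" "\<forall>i j. w i j = (if (i, j) \<in> E then 1 else 0)"
    using assms unfolding complete_dominance_graph_def by blast
  have "wf E" by (rule finite_acyclic_wf[OF _ E(3)]) simp
  then obtain z where z: "\<And>y. (y, z) \<notin> E"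
    using wf_eq_minimal[THEN iffD1, rule_format, of E z "UNIV"] by blast
  have wz: "\<And>j. w j z = 0" using z E(4) by simp
  have wz2: "\<And>j. j \<noteq> z \<Longrightarrow> w z j = 1" using z E(1,4) by metis
  have "out_degree w z = (\<Sum>j\<in>UNIV - {z}. w z j)" unfolding out_degree_def
    using wz by (simp add: sum_diff1)
  also have "\<dots> = (\<Sum>j\<in>UNIV - {z}. 1)" using wz2 by (intro sum.cong) auto
  also have "\<dots> = real CARD('n) - 1" by (simp add: card_Diff_subset of_nat_diff)
  finally have dz: "out_degree w z = real CARD('n) - 1" .
  define e :: "complex^'n" where "e = axis z 1"
  have "e \<noteq> 0" unfolding e_def by (simp add: axis_eq_0_iff)
  moreover have "cmat (laplacian w) *v e = complex_of_real (real CARD('n) - 1) *s e"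
  proof (rule vec_eq_iff[THEN iffD2], rule allI)
    fix i
    have "(\<Sum>j\<in>UNIV. complex_of_real (w i j) * e $ j) = complex_of_real (w i z)"
      unfolding e_def axis_def by (simp add: if_distrib cong: if_cong)
    thus "(cmat (laplacian w) *v e) $ i = (complex_of_real (real CARD('n) - 1) *s e) $ i"
      unfolding lap_row using wz dz by (auto simp: e_def axis_def)
  qed
  ultimately show ?thesis unfolding eigenvalues_def by blast
qed

lemma tour_eig_bound:
  fixes w :: "'n::finite \<Rightarrow> 'n \<Rightarrow> real"
  assumes "complete_dominance_graph w" "l \<in> eigenvalues (cmat (laplacian w))"
  shows "cmod l \<le> real CARD('n) - 1"
proof -
  obtain E :: "('n \<times> 'n) set" where E: "\<forall>i j. i \<noteq> j \<longrightarrow> ((i, j) \<in> E \<longleftrightarrow> (j, i) \<notin> E)"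
    "\<forall>i. (i, i) \<notin> E" "acyclic E" "\<forall>i j. w i j = (if (i, j) \<in> E then 1 else 0)"
    using assms unfolding complete_dominance_graph_def by blast
  obtain v where v: "v \<noteq> 0" "cmat (laplacian w) *v v = l *s v"
    using assms(2) unfolding eigenvalues_def by auto
  obtain k where k: "v $ k \<noteq> 0" using v(1) by (metis vec_eq_iff zero_index)
  have "wf (E\<inverse>)" by (rule finite_acyclic_wf_converse[OF _ E(3)]) simp
  then obtain i where i: "i \<in> {j. v $ j \<noteq> 0}" "\<And>y. (y, i) \<in> E\<inverse> \<Longrightarrow> y \<notin> {j. v $ j \<noteq> 0}"
    using wf_eq_minimal[THEN iffD1, rule_format, of "E\<inverse>" k "{j. v $ j \<noteq> 0}"] k by blast
  have "(\<Sum>j\<in>UNIV. complex_of_real (w i j) * v $ j) = 0"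
    using i(2) E(4) by (intro sum.neutral) auto
  hence "l * v $ i = complex_of_real (out_degree w i) * v $ i"
    using arg_cong[OF v(2), of "\<lambda>x. x $ i"] by (simp add: lap_row) (metis)
  hence "l = complex_of_real (out_degree w i)" using i(1) by simp
  thus ?thesis using deg_bounds[OF cdg_simple[OF assms(1)], of i] by simp
qed

theorem theorem3p9:
  fixes w w' :: "'n::finite \<Rightarrow> 'n \<Rightarrow> real"
  assumes "complete_dominance_graph w"
    and "simple_unit_weighted_digraph w'"
  shows "hausdorff_distance (cmat (laplacian w)) (cmat (laplacian w')) \<le> real CARD('n) - 1"
proof -
  let ?L = "cmat (laplacian w)" and ?L' = "cmat (laplacian w')"
  let ?N = "complex_of_real (real CARD('n) - 1)"
  have f1: "finite (eigenvalues ?L)" "finite (eigenvalues ?L')" by (rule eig_finite)+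
  have n1: "?N \<in> eigenvalues ?L" by (rule top_eig[OF assms(1)])
  have z2: "0 \<in> eigenvalues ?L'" by (rule zero_eig)
  have "spectral_variation ?L ?L' \<le> real CARD('n) - 1"
    unfolding spectral_variation_def
  proof (subst Max_le_iff)
    show "finite ((\<lambda>\<mu>. Min ((\<lambda>c. cmod (\<mu> - c)) ` eigenvalues ?L)) ` eigenvalues ?L')" using f1 by simp
    show "(\<lambda>\<mu>. Min ((\<lambda>c. cmod (\<mu> - c)) ` eigenvalues ?L)) ` eigenvalues ?L' \<noteq> {}" using z2 by blast
    show "\<forall>a\<in>(\<lambda>\<mu>. Min ((\<lambda>c. cmod (\<mu> - c)) ` eigenvalues ?L)) ` eigenvalues ?L'. a \<le> real CARD('n) - 1"
    proof safe
      fix \<mu> assume m: "\<mu> \<in> eigenvalues ?L'"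
      have "Min ((\<lambda>c. cmod (\<mu> - c)) ` eigenvalues ?L) \<le> cmod (\<mu> - ?N)"
        using f1 n1 by (intro Min_le) auto
      also have "\<dots> \<le> real CARD('n) - 1" by (rule gersh[OF assms(2) m])
      finally show "Min ((\<lambda>c. cmod (\<mu> - c)) ` eigenvalues ?L) \<le> real CARD('n) - 1" .
    qed
  qed
  moreover have "spectral_variation ?L' ?L \<le> real CARD('n) - 1"
    unfolding spectral_variation_def
  proof (subst Max_le_iff)
    show "finite ((\<lambda>\<mu>. Min ((\<lambda>c. cmod (\<mu> - c)) ` eigenvalues ?L')) ` eigenvalues ?L)" using f1 by simp
    show "(\<lambda>\<mu>. Min ((\<lambda>c. cmod (\<mu> - c)) ` eigenvalues ?L')) ` eigenvalues ?L \<noteq> {}" using n1 by blast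
    show "\<forall>a\<in>(\<lambda>\<mu>. Min ((\<lambda>c. cmod (\<mu> - c)) ` eigenvalues ?L')) ` eigenvalues ?L. a \<le> real CARD('n) - 1"
    proof safe
      fix \<mu> assume m: "\<mu> \<in> eigenvalues ?L"
      have "Min ((\<lambda>c. cmod (\<mu> - c)) ` eigenvalues ?L') \<le> cmod (\<mu> - 0)"
        using f1 z2 by (intro Min_le) (auto intro!: image_eqI[where x=0])
      also have "\<dots> \<le> real CARD('n) - 1" using tour_eig_bound[OF assms(1) m] by simp
      finally show "Min ((\<lambda>c. cmod (\<mu> - c)) ` eigenvalues ?L') \<le> real CARD('n) - 1" .
    qed
  qed
  ultimately show ?thesis unfolding hausdorff_distance_def by simp
qed

end
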